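(* Let $f:U\to H^3$ and $g:U\to S^3_1$ be the dual flat fronts described below and $p\in\Sigma(f)=\Sigma(g)$ a non-degenerate singular point. If the singular curve $\gamma$ passing through $p$ consists of cuspidal edges of $f$ (resp. $g$) and is a line of curvature of $f$ (resp. $g$), then $g$ (resp. $f$) has a cone-like singularity at $p$.
   Context: Let $U\subset\boldsymbol{C}$ be a domain, $\alpha,\beta:U\to\boldsymbol{C}\setminus\{0\}$ holomorphic, $A:U\to SL(2,\boldsymbol{C})$ a solution of $A'=AD$ with $D=\begin{pmatrix}0&\alpha\\ \beta&0\end{pmatrix}$, and, identifying Lorentz–Minkowski 4-space with $2\times2$ Hermitian matrices, $f=AA^*:U\to H^3$ (hyperbolic 3-space) and $g=Ae_3A^*:U\to S^3_1$ (de Sitter 3-space), $e_3=\mathrm{diag}(1,-1)$. These are flat fronts, each the unit normal of the other, with $\Sigma(f)=\Sigma(g)=\{\alpha\overline{\alpha}-\beta\overline{\beta}=0\}$. A curve $\gamma$ is a line of curvature of a frontal $k$ if the first fundamental form applied to $(k\circ\gamma)'$ is parallel to the second fundamental form applied to $(k\circ\gamma)'$. A non-degenerate singular point $p$ of a frontal $k$ is a cone-like singularity if there is a neighborhood $V$ of $p$ such that at every singular point $q\in V$ the null vector field $\eta_q$ (spanning $\ker dk_q$) is tangent to the singular set. *)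

theory Defs
  imports "HOL-Complex_Analysis.Complex_Analysis"
begin

text \<open>C-infinity on a set S (intended for open S): differentiable at every point of S,
  and every directional derivative is again C-infinity on S.\<close>
coinductive smooth_on :: "'a::real_normed_vector set \<Rightarrow> ('a \<Rightarrow> 'b::real_normed_vector) \<Rightarrow> bool"
  for S where
  "(\<forall>x\<in>S. f differentiable (at x)) \<Longrightarrow>
   (\<forall>v. smooth_on S (\<lambda>x. frechet_derivative f (at x) v)) \<Longrightarrow> smooth_on S f"

definition diffeo_on :: "('a::real_normed_vector \<Rightarrow> 'b::real_normed_vector) \<Rightarrow> 'a set \<Rightarrow> bool" where
  "diffeo_on \<phi> V \<longleftrightarrow> open V \<and> open (\<phi> ` V) \<and> inj_on \<phi> V \<and>
     smooth_on V \<phi> \<and> smooth_on (\<phi> ` V) (inv_into V \<phi>)"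

text \<open>A Hermitian matrix [[x0+x3, x1+i x2],[x1-i x2, x0-x3]] is identified with (x0,x1,x2,x3).\<close>
definition herm_to_L4 :: "complex^2^2 \<Rightarrow> real^4" where
  "herm_to_L4 M = vector [Re (M$1$1 + M$2$2) / 2, Re (M$1$2), Im (M$1$2), Re (M$1$1 - M$2$2) / 2]"

definition cadj :: "complex^2^2 \<Rightarrow> complex^2^2" where
  "cadj M = (\<chi> i j. cnj (M $ j $ i))"

definition e3 :: "complex^2^2" where
  "e3 = vector [vector [1, 0], vector [0, -1]]"

definition Dmat :: "complex \<Rightarrow> complex \<Rightarrow> complex^2^2" where
  "Dmat a b = vector [vector [0, a], vector [b, 0]]"

definition fmap :: "(complex \<Rightarrow> complex^2^2) \<Rightarrow> complex \<Rightarrow> real^4" where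
  "fmap A z = herm_to_L4 (A z ** cadj (A z))"

definition gmap :: "(complex \<Rightarrow> complex^2^2) \<Rightarrow> complex \<Rightarrow> real^4" where
  "gmap A z = herm_to_L4 (A z ** e3 ** cadj (A z))"

text \<open>Domain U is identified with R^2 via complex numbers; (u,v) = (Re z, Im z).\<close>

definition sing_set :: "(complex \<Rightarrow> real^4) \<Rightarrow> complex set \<Rightarrow> complex set" where
  "sing_set k U = {q\<in>U. \<not> inj (frechet_derivative k (at q))}"

definition signed_area :: "(complex \<Rightarrow> real^4) \<Rightarrow> (complex \<Rightarrow> real^4) \<Rightarrow> complex \<Rightarrow> real" where
  "signed_area k \<nu> q = det (vector [k q, frechet_derivative k (at q) 1,
                                    frechet_derivative k (at q) \<i>, \<nu> q] :: real^4^4)"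

definition nondeg_sing :: "(complex \<Rightarrow> real^4) \<Rightarrow> (complex \<Rightarrow> real^4) \<Rightarrow> complex set \<Rightarrow> complex \<Rightarrow> bool" where
  "nondeg_sing k \<nu> U p \<longleftrightarrow> p \<in> sing_set k U \<and>
     (\<exists>D. (signed_area k \<nu> has_derivative D) (at p) \<and> D \<noteq> (\<lambda>_. 0))"

definition cusp_std :: "complex \<Rightarrow> real^4" where
  "cusp_std z = vector [Re z, (Im z)^2, (Im z)^3, 0]"

definition cuspidal_edge :: "(complex \<Rightarrow> real^4) \<Rightarrow> complex set \<Rightarrow> complex \<Rightarrow> bool" where
  "cuspidal_edge k U p \<longleftrightarrow>
     (\<exists>V W (\<phi>::complex \<Rightarrow> complex) (\<Phi>::real^4 \<Rightarrow> real^4).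
        p \<in> V \<and> V \<subseteq> U \<and> k p \<in> W \<and> diffeo_on \<phi> V \<and> diffeo_on \<Phi> W \<and>
        \<phi> p = 0 \<and> \<Phi> (k p) = 0 \<and> (\<forall>x\<in>V. k x \<in> W \<and> \<Phi> (k x) = cusp_std (\<phi> x)))"

definition line_of_curvature ::
  "(complex \<Rightarrow> real^4) \<Rightarrow> (complex \<Rightarrow> real^4) \<Rightarrow> (real \<Rightarrow> complex) \<Rightarrow> real set \<Rightarrow> bool" where
  "line_of_curvature k \<nu> \<gamma> I \<longleftrightarrow>
     (\<forall>t\<in>I. \<exists>a b::real. (a, b) \<noteq> (0, 0) \<and>
        a *\<^sub>R vector_derivative (k \<circ> \<gamma>) (at t) + b *\<^sub>R vector_derivative (\<nu> \<circ> \<gamma>) (at t) = 0)"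

definition singular_curve_through ::
  "(complex \<Rightarrow> real^4) \<Rightarrow> complex set \<Rightarrow> complex \<Rightarrow> (real \<Rightarrow> complex) \<Rightarrow> real \<Rightarrow> bool" where
  "singular_curve_through k U p \<gamma> \<epsilon> \<longleftrightarrow> \<epsilon> > 0 \<and> \<gamma> 0 = p \<and>
     smooth_on {-\<epsilon><..<\<epsilon>} \<gamma> \<and> inj_on \<gamma> {-\<epsilon><..<\<epsilon>} \<and>
     (\<forall>t\<in>{-\<epsilon><..<\<epsilon>}. vector_derivative \<gamma> (at t) \<noteq> 0) \<and>
     (\<exists>W. open W \<and> p \<in> W \<and> \<gamma> ` {-\<epsilon><..<\<epsilon>} = sing_set k U \<inter> W)"

definition tangent_to :: "complex set \<Rightarrow> complex \<Rightarrow> complex \<Rightarrow> bool" where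
  "tangent_to S q v \<longleftrightarrow> (\<exists>c e. e > 0 \<and> c 0 = q \<and> (\<forall>t\<in>{-e<..<e}. c t \<in> S) \<and>
                                 (c has_vector_derivative v) (at 0))"

definition cone_like :: "(complex \<Rightarrow> real^4) \<Rightarrow> (complex \<Rightarrow> real^4) \<Rightarrow> complex set \<Rightarrow> complex \<Rightarrow> bool" where
  "cone_like k \<nu> U p \<longleftrightarrow> nondeg_sing k \<nu> U p \<and>
     (\<exists>V. open V \<and> p \<in> V \<and>
        (\<forall>q\<in>V \<inter> sing_set k U. \<forall>\<eta>. frechet_derivative k (at q) \<eta> = 0 \<longrightarrow>
            tangent_to (sing_set k U) q \<eta>))"

end

theory Submission
  imports Defs
begin

no_notation fps_nth (infixl \<open>$\<close> 75)




lemma vector_4 [simp]: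
 "(vector [x,y,z,w] ::('a::zero)^4)$1 = x"
 "(vector [x,y,z,w] ::('a::zero)^4)$2 = y"
 "(vector [x,y,z,w] ::('a::zero)^4)$3 = z"
 "(vector [x,y,z,w] ::('a::zero)^4)$4 = w"
  unfolding vector_def by simp_all

lemma mm2: "((X::'a::semiring_1^2^2) ** Y) $ i $ j = X$i$1 * Y$1$j + X$i$2 * Y$2$j"
  by (simp add: matrix_matrix_mult_def sum_2)

lemma cadj_nth[simp]: "cadj X $ i $ j = cnj (X $ j $ i)"
  by (simp add: cadj_def)

definition Xm :: "complex \<Rightarrow> complex^2^2" where
  "Xm u = vector [vector [0, u], vector [cnj u, 0]]"

lemma herm_lin: "herm_to_L4 (x + y) = herm_to_L4 x + herm_to_L4 y"
  "herm_to_L4 (c *\<^sub>R x) = c *\<^sub>R herm_to_L4 x"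
  by (auto simp: herm_to_L4_def vec_eq_iff forall_4 add_divide_distrib diff_divide_distrib algebra_simps)

lemma linear_herm: "linear herm_to_L4"
  by (simp add: herm_lin linearI)

lemma bounded_linear_herm: "bounded_linear herm_to_L4"
  using linear_herm linear_conv_bounded_linear by blast

lemma H_entries:
  "(M ** Xm u ** cadj M) $ 1 $ 1 = M$1$1 * u * cnj (M$1$2) + M$1$2 * cnj u * cnj (M$1$1)"
  "(M ** Xm u ** cadj M) $ 1 $ 2 = M$1$1 * u * cnj (M$2$2) + M$1$2 * cnj u * cnj (M$2$1)"
  "(M ** Xm u ** cadj M) $ 2 $ 1 = M$2$1 * u * cnj (M$1$2) + M$2$2 * cnj u * cnj (M$1$1)"
  "(M ** Xm u ** cadj M) $ 2 $ 2 = M$2$1 * u * cnj (M$2$2) + M$2$2 * cnj u * cnj (M$2$1)"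
  by (simp_all add: mm2 Xm_def)

lemma H_lin: "a *\<^sub>R herm_to_L4 (M ** Xm u ** cadj M) + b *\<^sub>R herm_to_L4 (M ** Xm w ** cadj M)
   = herm_to_L4 (M ** Xm (complex_of_real a * u + complex_of_real b * w) ** cadj M)"
  by (simp add: herm_to_L4_def vec_eq_iff forall_4 H_entries algebra_simps add_divide_distrib diff_divide_distrib)

lemma H_diff: "herm_to_L4 (M ** Xm u ** cadj M) - herm_to_L4 (M ** Xm w ** cadj M)
   = herm_to_L4 (M ** Xm (u - w) ** cadj M)"
  using H_lin[of 1 M u "-1" w] by simp

lemma H_inj:
  assumes "det M = 1" "herm_to_L4 (M ** Xm u ** cadj M) = 0"
  shows "u = 0"
proof -
  let ?Y = "M ** Xm u ** cadj M"
  have r11: "Im (?Y$1$1) = 0" and r22: "Im (?Y$2$2) = 0" and h21: "?Y$2$1 = cnj (?Y$1$2)"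
    by (simp_all add: H_entries algebra_simps)
  from assms(2) have "Re (?Y$1$1 + ?Y$2$2) = 0" "Re (?Y$1$1 - ?Y$2$2) = 0" "Re (?Y$1$2) = 0" "Im (?Y$1$2) = 0"
    by (auto simp: herm_to_L4_def vec_eq_iff forall_4)
  then have y: "?Y$1$1 = 0" "?Y$2$2 = 0" "?Y$1$2 = 0" "?Y$2$1 = 0"
    using r11 r22 h21 by (auto simp: complex_eq_iff)
  have d: "M$1$1 * M$2$2 - M$1$2 * M$2$1 = 1" using assms(1) by (simp add: det_2)
  have id: "M$2$2 * (?Y$1$1) * (- cnj (M$2$1)) + M$2$2 * (?Y$1$2) * cnj (M$1$1)
      + (- M$1$2) * (?Y$2$1) * (- cnj (M$2$1)) + (- M$1$2) * (?Y$2$2) * cnj (M$1$1)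
      = (M$1$1 * M$2$2 - M$1$2 * M$2$1) * u * cnj (M$1$1 * M$2$2 - M$1$2 * M$2$1)"
    by (simp add: H_entries algebra_simps)
  show ?thesis using id y d by simp
qed




lemma has_derivative_vecI:
  fixes f :: "'a::real_normed_vector \<Rightarrow> 'b::euclidean_space^'n"
  assumes "\<And>i. ((\<lambda>x. f x $ i) has_derivative (\<lambda>h. f' h $ i)) (at a within S)"
  shows "(f has_derivative f') (at a within S)"
proof (subst has_derivative_componentwise_within, intro ballI)
  fix j :: "'b^'n" assume "j \<in> Basis"
  then obtain i b where j: "j = axis i b" "b \<in> Basis" by (auto simp: Basis_vec_def)
  have "((\<lambda>x. f x $ i \<bullet> b) has_derivative (\<lambda>h. f' h $ i \<bullet> b)) (at a within S)"
    using bounded_linear.has_derivative[OF bounded_linear_inner_left assms[of i]] .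
  then show "((\<lambda>x. f x \<bullet> j) has_derivative (\<lambda>x. f' x \<bullet> j)) (at a within S)"
    by (simp add: j inner_axis inner_commute)
qed

lemma has_derivative_cnj' [derivative_intros]:
  "(f has_derivative f') F \<Longrightarrow> ((\<lambda>x. cnj (f x)) has_derivative (\<lambda>x. cnj (f' x))) F"
  using bounded_linear.has_derivative[OF bounded_linear_cnj] .

lemma deriv_AEA:
  assumes "\<And>i j. ((\<lambda>w. A w $ i $ j) has_field_derivative d $ i $ j) (at z)"
  shows "((\<lambda>w. A w ** E ** cadj (A w)) has_derivative
          (\<lambda>h. (\<chi> i j. h * d$i$j) ** E ** cadj (A z) + A z ** E ** cadj (\<chi> i j. h * d$i$j))) (at z)"
proof -
  have A: "((\<lambda>w. A w $ i $ j) has_derivative (\<lambda>h. d $ i $ j * h)) (at z)" for i j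
    using assms[of i j] by (simp add: has_field_derivative_def)
  have "((\<lambda>w. (A w ** E ** cadj (A w)) $ i $ j) has_derivative
     (\<lambda>h. ((\<chi> i j. h * d$i$j) ** E ** cadj (A z) + A z ** E ** cadj (\<chi> i j. h * d$i$j)) $ i $ j)) (at z)" for i j
    unfolding mm2 cadj_nth vector_add_component
    by (auto intro!: derivative_eq_intros A simp: algebra_simps)
  then show ?thesis by (intro has_derivative_vecI) auto
qed

lemma Pd_f:
  "(\<chi> i j. h * (M ** Dmat a b)$i$j) ** mat 1 ** cadj M + M ** mat 1 ** cadj (\<chi> i j. h * (M ** Dmat a b)$i$j)
   = M ** Xm (a * h + cnj b * cnj h) ** cadj M"
  by (simp add: vec_eq_iff forall_2 mm2 Dmat_def Xm_def mat_def algebra_simps)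

lemma Pd_g:
  "(\<chi> i j. h * (M ** Dmat a b)$i$j) ** e3 ** cadj M + M ** e3 ** cadj (\<chi> i j. h * (M ** Dmat a b)$i$j)
   = M ** Xm (cnj b * cnj h - a * h) ** cadj M"
  by (simp add: vec_eq_iff forall_2 mm2 Dmat_def Xm_def e3_def algebra_simps)




lemma smooth_on_diff: "smooth_on S f \<Longrightarrow> x \<in> S \<Longrightarrow> f differentiable (at x)"
  by (erule smooth_on.cases) auto

lemma has_derivative_vec4I:
  fixes f :: "'a::real_normed_vector \<Rightarrow> real^4"
  assumes "((\<lambda>x. f x $ 1) has_derivative (\<lambda>h. f' h $ 1)) (at a within S)"
    "((\<lambda>x. f x $ 2) has_derivative (\<lambda>h. f' h $ 2)) (at a within S)"
    "((\<lambda>x. f x $ 3) has_derivative (\<lambda>h. f' h $ 3)) (at a within S)"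
    "((\<lambda>x. f x $ 4) has_derivative (\<lambda>h. f' h $ 4)) (at a within S)"
  shows "(f has_derivative f') (at a within S)"
proof (rule has_derivative_vecI)
  fix i :: 4
  have "i = 1 \<or> i = 2 \<or> i = 3 \<or> i = 4" by (rule exhaust_4)
  then show "((\<lambda>x. f x $ i) has_derivative (\<lambda>h. f' h $ i)) (at a within S)"
    using assms by auto
qed

lemma cusp_deriv:
  "(cusp_std has_derivative (\<lambda>h. vector [Re h, 2 * Im z * Im h, 3 * (Im z)^2 * Im h, 0])) (at z)"
  by (rule has_derivative_vec4I; simp add: cusp_std_def[abs_def];
      auto intro!: derivative_eq_intros simp: algebra_simps power2_eq_square)

lemma vd_chain:
  assumes "(f has_derivative f') (at (g t))" "(g has_vector_derivative w) (at t)"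
  shows "((f \<circ> g) has_vector_derivative f' w) (at t)"
proof -
  have "((f \<circ> g) has_derivative (f' \<circ> (\<lambda>x. x *\<^sub>R w))) (at t)"
    using diff_chain_at[OF assms(2)[unfolded has_vector_derivative_def] assms(1)] .
  moreover have "f' \<circ> (\<lambda>x. x *\<^sub>R w) = (\<lambda>x. x *\<^sub>R f' w)"
    using has_derivative_linear[OF assms(1)] by (auto simp: o_def linear_scale)
  ultimately show ?thesis by (simp add: has_vector_derivative_def)
qed

lemma cusp_transversal:
  fixes k :: "complex \<Rightarrow> real^4"
  assumes ce: "cuspidal_edge k U q"
    and kd: "\<forall>x\<in>U. k differentiable (at x)"
    and gd: "(\<gamma> has_vector_derivative w) (at t)" and w0: "w \<noteq> 0" and gt: "\<gamma> t = q"
    and gs: "\<forall>s\<in>T. \<gamma> s \<in> sing_set k U" and T: "open T" "t \<in> T"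
  shows "frechet_derivative k (at q) w \<noteq> 0"
proof
  assume k0: "frechet_derivative k (at q) w = 0"
  obtain V W and \<phi> :: "complex \<Rightarrow> complex" and \<Phi> :: "real^4 \<Rightarrow> real^4" where
    qV: "q \<in> V" and VU: "V \<subseteq> U" and kW: "k q \<in> W" and dphi: "diffeo_on \<phi> V"
    and dPhi: "diffeo_on \<Phi> W" and phq: "\<phi> q = 0" and Phq: "\<Phi> (k q) = 0"
    and eq: "\<forall>x\<in>V. k x \<in> W \<and> \<Phi> (k x) = cusp_std (\<phi> x)"
    using ce unfolding cuspidal_edge_def by blast
  have oV: "open V" and ophV: "open (\<phi> ` V)" and smphi: "smooth_on V \<phi>"
    and sminv: "smooth_on (\<phi> ` V) (inv_into V \<phi>)" and injphi: "inj_on \<phi> V"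
    using dphi unfolding diffeo_on_def by auto
  have oW: "open W" and smPhi: "smooth_on W \<Phi>" using dPhi unfolding diffeo_on_def by auto
  define dk where "dk x = frechet_derivative k (at x)" for x
  define dph where "dph x = frechet_derivative \<phi> (at x)" for x
  define dPh where "dPh y = frechet_derivative \<Phi> (at y)" for y
  define dc where "dc z = (\<lambda>h::complex. vector [Re h, 2 * Im z * Im h, 3 * (Im z)^2 * Im h, 0] :: real^4)" for z
  have kder: "(k has_derivative dk x) (at x)" if "x \<in> V" for x
    using kd VU that frechet_derivative_works unfolding dk_def by blast
  have phder: "(\<phi> has_derivative dph x) (at x)" if "x \<in> V" for x
    using smooth_on_diff[OF smphi that] frechet_derivative_works unfolding dph_def by blast
  have Phder: "(\<Phi> has_derivative dPh y) (at y)" if "y \<in> W" for y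
    using smooth_on_diff[OF smPhi that] frechet_derivative_works unfolding dPh_def by blast
  have cder: "(cusp_std has_derivative dc z) (at z)" for z
    unfolding dc_def by (rule cusp_deriv)
  have dph_inj: "u = 0" if "x \<in> V" "dph x u = 0" for x u
  proof -
    let ?\<psi> = "inv_into V \<phi>"
    have "?\<psi> differentiable (at (\<phi> x))" using smooth_on_diff[OF sminv] that(1) by blast
    then have "(?\<psi> has_derivative frechet_derivative ?\<psi> (at (\<phi> x))) (at (\<phi> x))"
      using frechet_derivative_works by blast
    from diff_chain_at[OF phder[OF that(1)] this]
    have 1: "((?\<psi> \<circ> \<phi>) has_derivative (frechet_derivative ?\<psi> (at (\<phi> x)) \<circ> dph x)) (at x)" .
    have "((\<lambda>y. y) has_derivative (\<lambda>h. h)) (at x)" by (rule has_derivative_ident)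
    then have 2: "((?\<psi> \<circ> \<phi>) has_derivative (\<lambda>h. h)) (at x)"
      by (rule has_derivative_transform_within_open[OF _ oV that(1)]) (simp add: injphi)
    have "frechet_derivative ?\<psi> (at (\<phi> x)) \<circ> dph x = (\<lambda>h. h)"
      using has_derivative_unique[OF 1 2] .
    then have "frechet_derivative ?\<psi> (at (\<phi> x)) (dph x u) = u" by (metis comp_apply)
    moreover have "linear (frechet_derivative ?\<psi> (at (\<phi> x)))"
      using \<open>(?\<psi> has_derivative _) _\<close> has_derivative_linear by blast
    ultimately show "u = 0" using that(2) linear_0 by metis
  qed
  have chain: "dPh (k x) (dk x u) = dc (\<phi> x) (dph x u)" if "x \<in> V" for x u
  proof -
    have 1: "((\<Phi> \<circ> k) has_derivative (dPh (k x) \<circ> dk x)) (at x)"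
      using diff_chain_at[OF kder[OF that] Phder] eq that by blast
    have 2: "((cusp_std \<circ> \<phi>) has_derivative (dc (\<phi> x) \<circ> dph x)) (at x)"
      using diff_chain_at[OF phder[OF that] cder] .
    have 3: "((\<Phi> \<circ> k) has_derivative (dc (\<phi> x) \<circ> dph x)) (at x)"
      by (rule has_derivative_transform_within_open[OF 2 oV that]) (simp add: eq)
    show ?thesis using has_derivative_unique[OF 1 3] by (metis comp_apply)
  qed
  have dPh0: "dPh y 0 = 0" if "y \<in> W" for y
    using has_derivative_linear[OF Phder[OF that]] linear_0 by blast
  have singIm: "Im (\<phi> x) = 0" if "x \<in> V" "x \<in> sing_set k U" for x
  proof -
    have "\<not> inj (dk x)" using that unfolding sing_set_def dk_def by auto
    moreover have "linear (dk x)" using has_derivative_linear[OF kder[OF that(1)]] .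
    ultimately obtain u where u: "u \<noteq> 0" "dk x u = 0" using linear_injective_0 by blast
    have "dc (\<phi> x) (dph x u) = 0" using chain[OF that(1), of u] u dPh0 eq that(1) by simp
    then have "Re (dph x u) = 0" "2 * Im (\<phi> x) * Im (dph x u) = 0"
      unfolding dc_def by (auto simp: vec_eq_iff forall_4)
    moreover have "dph x u \<noteq> 0" using dph_inj[OF that(1)] u by blast
    ultimately show ?thesis by (auto simp: complex_eq_iff)
  qed
  let ?h = "dph q w"
  have sd: "((\<phi> \<circ> \<gamma>) has_vector_derivative ?h) (at t)"
    using vd_chain[of \<phi> "dph q" \<gamma> t w] phder[OF qV] gd gt by simp
  have "continuous (at t) \<gamma>" using gd has_vector_derivative_continuous by blast
  then obtain S where S: "open S" "t \<in> S" "\<forall>s\<in>S. \<gamma> s \<in> V"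
    using continuous_at_open[of t \<gamma>] oV qV gt by metis
  have imd: "((\<lambda>s. Im ((\<phi> \<circ> \<gamma>) s)) has_derivative (\<lambda>x. Im (x *\<^sub>R ?h))) (at t)"
    using has_derivative_Im[OF sd[unfolded has_vector_derivative_def]] .
  have z: "Im ((\<phi> \<circ> \<gamma>) s) = 0" if "s \<in> S \<inter> T" for s
    using singIm[of "\<gamma> s"] S(3) gs that by auto
  have "((\<lambda>s. 0::real) has_derivative (\<lambda>x. Im (x *\<^sub>R ?h))) (at t)"
    by (rule has_derivative_transform_within_open[OF imd, of "S \<inter> T"])
       (use S T z in auto)
  moreover have "((\<lambda>s. 0::real) has_derivative (\<lambda>x. 0)) (at t)" by (rule has_derivative_const)
  ultimately have feq: "(\<lambda>x. Im (x *\<^sub>R ?h)) = (\<lambda>x. 0)" using has_derivative_unique by blast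
  have "Im ((1::real) *\<^sub>R ?h) = 0" using fun_cong[OF feq, of 1] by simp
  then have imh: "Im ?h = 0" by simp
  have "dc (\<phi> q) ?h = 0" using chain[OF qV, of w] k0 dPh0 kW unfolding dk_def by simp
  then have "Re ?h = 0" unfolding dc_def by (auto simp: vec_eq_iff forall_4)
  with imh have "?h = 0" by (simp add: complex_eq_iff)
  then show False using dph_inj[OF qV] w0 by blast
qed




definition HH :: "complex^2^2 \<Rightarrow> complex \<Rightarrow> real^4" where
  "HH M u = herm_to_L4 (M ** Xm u ** cadj M)"

lemma HH0: "HH M 0 = 0"
  by (simp add: HH_def herm_to_L4_def vec_eq_iff forall_4 H_entries)

lemma sing_char:
  assumes z: "z \<in> U" and kd: "(k has_derivative (\<lambda>h. HH M (u h))) (at z)" and d: "det M = 1"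
    and ul: "\<And>x y. u x - u y = u (x - y)"
  shows "z \<in> sing_set k U \<longleftrightarrow> (\<exists>v. v \<noteq> 0 \<and> u v = 0)"
proof -
  have fd: "frechet_derivative k (at z) = (\<lambda>h. HH M (u h))"
    using frechet_derivative_at[OF kd] by simp
  have u0: "u 0 = 0" using ul[of 0 0] by simp
  have "inj (\<lambda>h. HH M (u h)) \<longleftrightarrow> \<not> (\<exists>v. v \<noteq> 0 \<and> u v = 0)"
  proof
    assume i: "inj (\<lambda>h. HH M (u h))"
    show "\<not> (\<exists>v. v \<noteq> 0 \<and> u v = 0)"
    proof
      assume "\<exists>v. v \<noteq> 0 \<and> u v = 0"
      then obtain v where "v \<noteq> 0" "u v = 0" by blast
      then have "HH M (u v) = HH M (u 0)" using u0 by simp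
      then show False using i \<open>v \<noteq> 0\<close> by (meson injD)
    qed
  next
    assume n: "\<not> (\<exists>v. v \<noteq> 0 \<and> u v = 0)"
    show "inj (\<lambda>h. HH M (u h))"
    proof (rule injI)
      fix x y assume "HH M (u x) = HH M (u y)"
      then have "HH M (u x) - HH M (u y) = 0" by simp
      then have "HH M (u (x - y)) = 0" using H_diff[of M "u x" "u y"] ul unfolding HH_def by simp
      then have "u (x - y) = 0" using H_inj[OF d] unfolding HH_def by blast
      then show "x = y" using n by (metis right_minus_eq)
    qed
  qed
  then show ?thesis using z fd unfolding sing_set_def by auto
qed

lemma ker_swap:
  "(\<exists>v. v \<noteq> 0 \<and> a * v + cnj b * cnj v = 0) \<longleftrightarrow> (\<exists>v. v \<noteq> 0 \<and> cnj b * cnj v - a * v = 0)"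
proof
  assume "\<exists>v. v \<noteq> 0 \<and> a * v + cnj b * cnj v = 0"
  then obtain v where v: "v \<noteq> 0" "a * v + cnj b * cnj v = 0" by blast
  have "cnj b * cnj (\<i> * v) - a * (\<i> * v) = - \<i> * (a * v + cnj b * cnj v)"
    by (simp add: algebra_simps)
  then show "\<exists>v. v \<noteq> 0 \<and> cnj b * cnj v - a * v = 0" using v by (intro exI[of _ "\<i> * v"]) simp
next
  assume "\<exists>v. v \<noteq> 0 \<and> cnj b * cnj v - a * v = 0"
  then obtain v where v: "v \<noteq> 0" "cnj b * cnj v - a * v = 0" by blast
  have "a * (\<i> * v) + cnj b * cnj (\<i> * v) = - \<i> * (cnj b * cnj v - a * v)"
    by (simp add: algebra_simps)
  then show "\<exists>v. v \<noteq> 0 \<and> a * v + cnj b * cnj v = 0" using v by (intro exI[of _ "\<i> * v"]) simp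
qed

lemma mod_eq:
  assumes "v \<noteq> 0" "a * v + cnj b * cnj v = 0"
  shows "cmod a = cmod b"
proof -
  have "a * v = - (cnj b * cnj v)" using assms(2) by (simp add: eq_neg_iff_add_eq_0)
  then have "cmod a * cmod v = cmod b * cmod v" by (metis norm_minus_cancel norm_mult complex_mod_cnj)
  then show ?thesis using assms(1) by simp
qed

lemma alg_d:
  fixes a b w :: complex and r s :: real
  assumes m: "cmod a = cmod b" and a0: "a \<noteq> 0" and w0: "w \<noteq> 0" and rs: "(r, s) \<noteq> (0, 0)"
    and e: "complex_of_real r * (a*w + cnj b * cnj w) + complex_of_real s * (cnj b * cnj w - a * w) = 0"
    and nz: "a*w + cnj b * cnj w \<noteq> 0"
  shows "cnj b * cnj w - a * w = 0"
proof -
  have "complex_of_real (r - s) * (a*w) = - (complex_of_real (r+s) * (cnj b * cnj w))"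
    using e by (simp add: algebra_simps eq_neg_iff_add_eq_0)
  then have "cmod (complex_of_real (r - s) * (a*w)) = cmod (complex_of_real (r+s) * (cnj b * cnj w))"
    by (metis norm_minus_cancel)
  then have "\<bar>r - s\<bar> * (cmod a * cmod w) = \<bar>r + s\<bar> * (cmod a * cmod w)"
    using m by (simp only: norm_mult norm_of_real complex_mod_cnj)
  moreover have "cmod a * cmod w > 0" using a0 w0 by simp
  ultimately have "\<bar>r - s\<bar> = \<bar>r + s\<bar>" using a0 w0 by simp
  then have "(r - s)^2 = (r + s)^2" by (metis power2_abs)
  then have "r * s = 0" by (simp add: power2_eq_square algebra_simps)
  then have "r = 0 \<or> s = 0" by simp
  then show ?thesis
  proof
    assume "s = 0"
    then have "r \<noteq> 0" using rs by simp
    then show ?thesis using e nz \<open>s = 0\<close> by simp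
  next
    assume "r = 0"
    then have "s \<noteq> 0" using rs by simp
    then show ?thesis using e \<open>r = 0\<close> by simp
  qed
qed

lemma alg_e:
  fixes a b w \<eta> :: complex
  assumes a0: "a \<noteq> 0" and b0: "b \<noteq> 0" and w0: "w \<noteq> 0"
    and e1: "cnj b * cnj w - a * w = 0" and e2: "cnj b * cnj \<eta> - a * \<eta> = 0"
  shows "\<exists>c::real. \<eta> = complex_of_real c * w"
proof -
  have "(cnj b * cnj \<eta>) * (a * w) = (a * \<eta>) * (cnj b * cnj w)" using e1 e2 by simp
  then have "(cnj b * a) * (cnj \<eta> * w - \<eta> * cnj w) = 0" by (simp add: algebra_simps)
  moreover have "cnj b * a \<noteq> 0" using a0 b0 by simp
  ultimately have x: "cnj \<eta> * w = \<eta> * cnj w" by simp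
  define c where "c = \<eta> / w"
  have "cnj c = c" using x w0 unfolding c_def by (simp add: field_simps)
  then have "Im c = 0" by (simp add: complex_eq_iff)
  then have "c = complex_of_real (Re c)" by (simp add: complex_eq_iff)
  moreover have "\<eta> = c * w" using w0 unfolding c_def by simp
  ultimately show ?thesis by metis
qed




lemma fmap_deriv:
  assumes "\<forall>i j. ((\<lambda>w. A w $ i $ j) has_field_derivative (A z ** Dmat (\<alpha> z) (\<beta> z)) $ i $ j) (at z)"
  shows "(fmap A has_derivative (\<lambda>h. HH (A z) (\<alpha> z * h + cnj (\<beta> z) * cnj h))) (at z)"
proof -
  have 1: "((\<lambda>w. A w ** mat 1 ** cadj (A w)) has_derivative
      (\<lambda>h. A z ** Xm (\<alpha> z * h + cnj (\<beta> z) * cnj h) ** cadj (A z))) (at z)"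
    using deriv_AEA[of A "A z ** Dmat (\<alpha> z) (\<beta> z)" z "mat 1", unfolded Pd_f] assms by blast
  have 2: "((\<lambda>w. herm_to_L4 (A w ** mat 1 ** cadj (A w))) has_derivative
      (\<lambda>h. herm_to_L4 (A z ** Xm (\<alpha> z * h + cnj (\<beta> z) * cnj h) ** cadj (A z)))) (at z)"
    using bounded_linear.has_derivative[OF bounded_linear_herm 1] .
  have "fmap A = (\<lambda>w. herm_to_L4 (A w ** mat 1 ** cadj (A w)))"
    by (rule ext) (simp add: fmap_def matrix_mul_rid)
  then show ?thesis using 2 by (simp add: HH_def)
qed

lemma gmap_deriv:
  assumes "\<forall>i j. ((\<lambda>w. A w $ i $ j) has_field_derivative (A z ** Dmat (\<alpha> z) (\<beta> z)) $ i $ j) (at z)"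
  shows "(gmap A has_derivative (\<lambda>h. HH (A z) (cnj (\<beta> z) * cnj h - \<alpha> z * h))) (at z)"
proof -
  have 1: "((\<lambda>w. A w ** e3 ** cadj (A w)) has_derivative
      (\<lambda>h. A z ** Xm (cnj (\<beta> z) * cnj h - \<alpha> z * h) ** cadj (A z))) (at z)"
    using deriv_AEA[of A "A z ** Dmat (\<alpha> z) (\<beta> z)" z "e3", unfolded Pd_g] assms by blast
  have 2: "((\<lambda>w. herm_to_L4 (A w ** e3 ** cadj (A w))) has_derivative
      (\<lambda>h. herm_to_L4 (A z ** Xm (cnj (\<beta> z) * cnj h - \<alpha> z * h) ** cadj (A z)))) (at z)"
    using bounded_linear.has_derivative[OF bounded_linear_herm 1] .
  have "gmap A = (\<lambda>w. herm_to_L4 (A w ** e3 ** cadj (A w)))"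
    by (rule ext) (simp add: gmap_def)
  then show ?thesis using 2 by (simp add: HH_def)
qed

lemma main_abs:
  fixes k \<nu> :: "complex \<Rightarrow> real^4" and a b :: "complex \<Rightarrow> complex" and M :: "complex \<Rightarrow> complex^2^2"
    and \<gamma> :: "real \<Rightarrow> complex"
  assumes nz: "\<forall>z\<in>U. a z \<noteq> 0 \<and> b z \<noteq> 0"
    and det: "\<forall>z\<in>U. det (M z) = 1"
    and dk: "\<forall>z\<in>U. (k has_derivative (\<lambda>h. HH (M z) (a z * h + cnj (b z) * cnj h))) (at z)"
    and dn: "\<forall>z\<in>U. (\<nu> has_derivative (\<lambda>h. HH (M z) (cnj (b z) * cnj h - a z * h))) (at z)"
    and nd: "nondeg_sing \<nu> k U p"
    and sc: "singular_curve_through k U p \<gamma> \<epsilon>"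
    and ce: "\<forall>t\<in>{-\<epsilon><..<\<epsilon>}. cuspidal_edge k U (\<gamma> t)"
    and lc: "line_of_curvature k \<nu> \<gamma> {-\<epsilon><..<\<epsilon>}"
  shows "cone_like \<nu> k U p"
proof -
  define I where "I = {-\<epsilon><..<\<epsilon>}"
  obtain W where ep: "\<epsilon> > 0" and sm: "smooth_on I \<gamma>"
    and vd0: "\<forall>t\<in>I. vector_derivative \<gamma> (at t) \<noteq> 0"
    and oW: "open W" and pW: "p \<in> W" and img: "\<gamma> ` I = sing_set k U \<inter> W"
    using sc unfolding singular_curve_through_def I_def by blast
  have sk: "z \<in> sing_set k U \<longleftrightarrow> (\<exists>v. v \<noteq> 0 \<and> a z * v + cnj (b z) * cnj v = 0)" if "z \<in> U" for z
    by (rule sing_char[of z U k "M z" "\<lambda>h. a z * h + cnj (b z) * cnj h"])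
       (use that dk det in \<open>auto simp: algebra_simps\<close>)
  have sn: "z \<in> sing_set \<nu> U \<longleftrightarrow> (\<exists>v. v \<noteq> 0 \<and> cnj (b z) * cnj v - a z * v = 0)" if "z \<in> U" for z
    by (rule sing_char[of z U \<nu> "M z" "\<lambda>h. cnj (b z) * cnj h - a z * h"])
       (use that dn det in \<open>auto simp: algebra_simps\<close>)
  have sing_eq: "sing_set k U = sing_set \<nu> U"
  proof (rule set_eqI)
    fix z show "z \<in> sing_set k U \<longleftrightarrow> z \<in> sing_set \<nu> U"
    proof (cases "z \<in> U")
      case True then show ?thesis using sk sn ker_swap by blast
    next
      case False then show ?thesis by (simp add: sing_set_def)
    qed
  qed
  have kdiff: "\<forall>x\<in>U. k differentiable (at x)" using dk by (auto simp: differentiable_def)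
  have oI: "open I" unfolding I_def by simp
  have gs: "\<forall>s\<in>I. \<gamma> s \<in> sing_set k U" using img by blast
  have main: "tangent_to (sing_set \<nu> U) q \<eta>"
    if q: "q \<in> W \<inter> sing_set \<nu> U" and eta: "frechet_derivative \<nu> (at q) \<eta> = 0" for q \<eta>
  proof -
    have qk: "q \<in> sing_set k U \<inter> W" using q sing_eq by auto
    then obtain t where tI: "t \<in> I" and qt: "q = \<gamma> t" using img by (metis imageE)
    have qU: "q \<in> U" using qk unfolding sing_set_def by auto
    define w where "w = vector_derivative \<gamma> (at t)"
    have gd: "(\<gamma> has_vector_derivative w) (at t)"
      using smooth_on_diff[OF sm tI] vector_derivative_works unfolding w_def by blast
    have w0: "w \<noteq> 0" using vd0 tI w_def by auto
    obtain r s :: real where rs: "(r, s) \<noteq> (0, 0)"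
      and lce: "r *\<^sub>R vector_derivative (k \<circ> \<gamma>) (at t) + s *\<^sub>R vector_derivative (\<nu> \<circ> \<gamma>) (at t) = 0"
      using lc tI unfolding line_of_curvature_def I_def by blast
    have dkq: "(k has_derivative (\<lambda>h. HH (M q) (a q * h + cnj (b q) * cnj h))) (at (\<gamma> t))"
      using dk qU qt by simp
    have dnq: "(\<nu> has_derivative (\<lambda>h. HH (M q) (cnj (b q) * cnj h - a q * h))) (at (\<gamma> t))"
      using dn qU qt by simp
    have vk: "vector_derivative (k \<circ> \<gamma>) (at t) = HH (M q) (a q * w + cnj (b q) * cnj w)"
      using vector_derivative_at[OF vd_chain[OF dkq gd]] by simp
    have vn: "vector_derivative (\<nu> \<circ> \<gamma>) (at t) = HH (M q) (cnj (b q) * cnj w - a q * w)"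
      using vector_derivative_at[OF vd_chain[OF dnq gd]] by simp
    have "HH (M q) (complex_of_real r * (a q * w + cnj (b q) * cnj w)
             + complex_of_real s * (cnj (b q) * cnj w - a q * w)) = 0"
      using lce unfolding vk vn HH_def H_lin .
    then have e: "complex_of_real r * (a q * w + cnj (b q) * cnj w)
             + complex_of_real s * (cnj (b q) * cnj w - a q * w) = 0"
      using H_inj det qU unfolding HH_def by blast
    have fk: "frechet_derivative k (at q) = (\<lambda>h. HH (M q) (a q * h + cnj (b q) * cnj h))"
      using frechet_derivative_at[OF dkq] qt by simp
    have fn: "frechet_derivative \<nu> (at q) = (\<lambda>h. HH (M q) (cnj (b q) * cnj h - a q * h))"
      using frechet_derivative_at[OF dnq] qt by simp
    have ceq: "cuspidal_edge k U q" using ce tI qt unfolding I_def by blast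
    have "frechet_derivative k (at q) w \<noteq> 0"
      using cusp_transversal[OF ceq kdiff gd w0 qt[symmetric] gs oI tI] .
    then have nzk: "a q * w + cnj (b q) * cnj w \<noteq> 0" using fk HH0 by auto
    have ab: "cmod (a q) = cmod (b q)" using sk[OF qU] qk mod_eq by blast
    have unw: "cnj (b q) * cnj w - a q * w = 0"
      using alg_d[OF ab _ w0 rs e nzk] nz qU by blast
    have "HH (M q) (cnj (b q) * cnj \<eta> - a q * \<eta>) = 0" using eta fn by simp
    then have une: "cnj (b q) * cnj \<eta> - a q * \<eta> = 0"
      using H_inj det qU unfolding HH_def by blast
    obtain c :: real where c: "\<eta> = complex_of_real c * w"
      using alg_e[OF _ _ w0 unw une] nz qU by blast
    have ta: "\<bar>t\<bar> < \<epsilon>" using tI unfolding I_def by auto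
    define e where "e = (\<epsilon> - \<bar>t\<bar>) / (\<bar>c\<bar> + 1)"
    have e0: "e > 0" unfolding e_def using ta by (simp add: add_pos_nonneg)
    have inI: "t + c * \<tau> \<in> I" if "\<tau> \<in> {-e<..<e}" for \<tau>
    proof -
      have "\<bar>\<tau>\<bar> < e" using that by auto
      then have "\<bar>c\<bar> * \<bar>\<tau>\<bar> \<le> \<bar>c\<bar> * e" by (simp add: mult_left_mono)
      also have "\<dots> < (\<bar>c\<bar> + 1) * e" using e0 by (simp add: algebra_simps)
      also have "\<dots> = \<epsilon> - \<bar>t\<bar>" unfolding e_def by simp
      finally have "\<bar>c * \<tau>\<bar> < \<epsilon> - \<bar>t\<bar>" by (simp add: abs_mult)
      then show ?thesis unfolding I_def by auto
    qed
    have lin: "((\<lambda>\<tau>. t + c * \<tau>) has_vector_derivative c) (at 0)"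
      unfolding has_real_derivative_iff_has_vector_derivative[symmetric]
      by (auto intro!: derivative_eq_intros)
    have gd': "(\<gamma> has_vector_derivative w) (at ((\<lambda>\<tau>. t + c * \<tau>) 0))" using gd by simp
    have "((\<gamma> \<circ> (\<lambda>\<tau>. t + c * \<tau>)) has_vector_derivative (c *\<^sub>R w)) (at 0)"
      using vector_diff_chain_at[OF lin gd'] .
    then have der: "((\<lambda>\<tau>. \<gamma> (t + c * \<tau>)) has_vector_derivative \<eta>) (at 0)"
      using c by (simp add: o_def scaleR_conv_of_real)
    show ?thesis unfolding tangent_to_def
    proof (intro exI conjI ballI)
      show "e > 0" by (rule e0)
      show "\<gamma> (t + c * 0) = q" using qt by simp
      show "\<gamma> (t + c * \<tau>) \<in> sing_set \<nu> U" if "\<tau> \<in> {-e<..<e}" for \<tau>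
        using gs inI[OF that] sing_eq by auto
      show "((\<lambda>\<tau>. \<gamma> (t + c * \<tau>)) has_vector_derivative \<eta>) (at 0)" by (rule der)
    qed
  qed
  show ?thesis unfolding cone_like_def
    using nd oW pW main by blast
qed




theorem corollary4p3:
  fixes U :: "complex set" and \<alpha> \<beta> :: "complex \<Rightarrow> complex"
    and A :: "complex \<Rightarrow> complex^2^2" and p :: complex
  assumes "open U" and "connected U"
    and "\<alpha> holomorphic_on U" and "\<beta> holomorphic_on U"
    and "\<forall>z\<in>U. \<alpha> z \<noteq> 0 \<and> \<beta> z \<noteq> 0"
    and "\<forall>z\<in>U. det (A z) = 1"
    and "\<forall>z\<in>U. \<forall>i j. ((\<lambda>w. A w $ i $ j) has_field_derivative (A z ** Dmat (\<alpha> z) (\<beta> z)) $ i $ j) (at z)"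
    and "nondeg_sing (fmap A) (gmap A) U p"
    and "nondeg_sing (gmap A) (fmap A) U p"
  shows "(\<forall>\<gamma> \<epsilon>. singular_curve_through (fmap A) U p \<gamma> \<epsilon> \<and>
             (\<forall>t\<in>{-\<epsilon><..<\<epsilon>}. cuspidal_edge (fmap A) U (\<gamma> t)) \<and>
             line_of_curvature (fmap A) (gmap A) \<gamma> {-\<epsilon><..<\<epsilon>}
           \<longrightarrow> cone_like (gmap A) (fmap A) U p)
       \<and> (\<forall>\<gamma> \<epsilon>. singular_curve_through (gmap A) U p \<gamma> \<epsilon> \<and>
             (\<forall>t\<in>{-\<epsilon><..<\<epsilon>}. cuspidal_edge (gmap A) U (\<gamma> t)) \<and>
             line_of_curvature (gmap A) (fmap A) \<gamma> {-\<epsilon><..<\<epsilon>}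
           \<longrightarrow> cone_like (fmap A) (gmap A) U p)"
proof -
  have f1: "\<forall>z\<in>U. (fmap A has_derivative (\<lambda>h. HH (A z) (\<alpha> z * h + cnj (\<beta> z) * cnj h))) (at z)"
    using fmap_deriv assms(7) by blast
  have g1: "\<forall>z\<in>U. (gmap A has_derivative (\<lambda>h. HH (A z) (cnj (\<beta> z) * cnj h - \<alpha> z * h))) (at z)"
    using gmap_deriv assms(7) by blast
  have e1: "(\<lambda>h. HH (A z) (- \<alpha> z * h + cnj (\<beta> z) * cnj h)) = (\<lambda>h. HH (A z) (cnj (\<beta> z) * cnj h - \<alpha> z * h))" for z
    by (simp add: algebra_simps)
  have e2: "(\<lambda>h. HH (A z) (cnj (\<beta> z) * cnj h - - \<alpha> z * h)) = (\<lambda>h. HH (A z) (\<alpha> z * h + cnj (\<beta> z) * cnj h))" for z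
    by (simp add: algebra_simps)
  have g2: "\<forall>z\<in>U. (gmap A has_derivative (\<lambda>h. HH (A z) (- \<alpha> z * h + cnj (\<beta> z) * cnj h))) (at z)"
    using g1 e1 by simp
  have f2: "\<forall>z\<in>U. (fmap A has_derivative (\<lambda>h. HH (A z) (cnj (\<beta> z) * cnj h - - \<alpha> z * h))) (at z)"
    using f1 e2 by simp
  have nz2: "\<forall>z\<in>U. - \<alpha> z \<noteq> 0 \<and> \<beta> z \<noteq> 0" using assms(5) by simp
  show ?thesis
  proof (intro conjI allI impI)
    fix \<gamma> \<epsilon>
    assume H: "singular_curve_through (fmap A) U p \<gamma> \<epsilon> \<and>
             (\<forall>t\<in>{-\<epsilon><..<\<epsilon>}. cuspidal_edge (fmap A) U (\<gamma> t)) \<and>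
             line_of_curvature (fmap A) (gmap A) \<gamma> {-\<epsilon><..<\<epsilon>}"
    show "cone_like (gmap A) (fmap A) U p"
      using main_abs[of U \<alpha> \<beta> A "fmap A" "gmap A" p \<gamma> \<epsilon>] assms(5,6,9) f1 g1 H by blast
  next
    fix \<gamma> \<epsilon>
    assume H: "singular_curve_through (gmap A) U p \<gamma> \<epsilon> \<and>
             (\<forall>t\<in>{-\<epsilon><..<\<epsilon>}. cuspidal_edge (gmap A) U (\<gamma> t)) \<and>
             line_of_curvature (gmap A) (fmap A) \<gamma> {-\<epsilon><..<\<epsilon>}"
    show "cone_like (fmap A) (gmap A) U p"
      using main_abs[of U "\<lambda>z. - \<alpha> z" \<beta> A "gmap A" "fmap A" p \<gamma> \<epsilon>] nz2 assms(6,8) f2 g2 H by blast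
  qed
qed

end
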